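(* Consider an $N_r\times N_t$ MIMO setting with constellations $\mathcal{A}_0,\dots,\mathcal{A}_{N_t-1}$ and the associated pseudo-Boolean function $f(z_0,\dots,z_{N-1})=\sum_{S}\bar d_S\prod_{n\in S}z_n$ defined in the context. Let $S\subseteq\{0,\dots,N-1\}$ and suppose there is an antenna index $k$ such that, writing $S_k=S\cap\mathcal{N}_k$, the points $a^{(k)}_{t}\in\mathcal{A}_k$ whose local $N_k$-bit labels $[t]_2$ have bit $0$ at every local position corresponding to $\mathcal{N}_k\setminus S_k$ form a family of rectangles in $\mathbb{C}$ (each with four of these points as vertices, together covering all of them) such that no two rectangles share a vertex, and in each rectangle the local labels of one diagonal pair both contain an odd number of $0$s while those of the other diagonal pair both contain an even number of $0$s. Then $\bar d_S=0$ for all $\mathbf{y}\in\mathbb{C}^{N_r}$ and $\mathbf{H}\in\mathbb{C}^{N_r\times N_t}$.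
   Context: For $k=0,\dots,N_t-1$, $\mathcal{A}_k=\{a^{(k)}_0,\dots,a^{(k)}_{M_k-1}\}\subset\mathbb{C}$ with $M_k=2^{N_k}$; the local label of $a^{(k)}_t$ is the $N_k$-bit binary representation $[t]_2$ (most significant bit first). Let $N=\sum_k N_k$ and $\mathcal{N}_k=\{\sum_{l<k}N_l,\dots,\sum_{l\le k}N_l-1\}$. A joint index $i\in\{0,\dots,2^N-1\}$ corresponds to a tuple $(i_0,\dots,i_{N_t-1})$ via concatenation of binary representations: the $N$-bit representation $b_0(i)\cdots b_{N-1}(i)$ of $i$ equals $[i_0]_2[i_1]_2\cdots[i_{N_t-1}]_2$, so bits at positions $\mathcal{N}_k$ form $[i_k]_2$. Given received vector $\mathbf{y}=(y_0,\dots,y_{N_r-1})$ and channel matrix $\mathbf{H}=(h_{l,k})$, set $d_{l,i}=\big|y_l-\sum_{k}h_{l,k}a^{(k)}_{i_k}\big|^2$ and $f(z_0,\dots,z_{N-1})=\sum_{l=0}^{N_r-1}\sum_{i}d_{l,i}\prod_{n=0}^{N-1}B_{i,n}(z_n)$, $z_n\in\{0,1\}$, where $B_{i,n}(z)=z$ if $b_n(i)=1$ and $1-z$ if $b_n(i)=0$. Its multilinear expansion is $f=\sum_{S\subseteq\{0,\dots,N-1\}}\bar d_S\prod_{n\in S}z_n$, with $\bar d_S=\sum_{l}\sum_{i:\,b_n(i)=0\ \forall n\notin S}d_{l,i}\prod_{n\in S}(-1)^{1-b_n(i)}$. *)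

theory Defs
  imports Complex_Main
begin

text \<open>Antennas k < Nt; antenna k carries Nb k bits; constellation point a k t (t < 2^(Nb k)).\<close>

definition Ntot :: "(nat \<Rightarrow> nat) \<Rightarrow> nat \<Rightarrow> nat" where
  "Ntot Nb Nt = (\<Sum>k<Nt. Nb k)"

definition offs :: "(nat \<Rightarrow> nat) \<Rightarrow> nat \<Rightarrow> nat" where
  "offs Nb k = (\<Sum>l<k. Nb l)"

definition blk :: "(nat \<Rightarrow> nat) \<Rightarrow> nat \<Rightarrow> nat set" where
  "blk Nb k = {offs Nb k ..< offs Nb k + Nb k}"

text \<open>Bit at position n (0 = most significant) of the w-bit binary representation of i.\<close>
definition msb_bit :: "nat \<Rightarrow> nat \<Rightarrow> nat \<Rightarrow> bool" where
  "msb_bit w i n = bit i (w - 1 - n)"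

text \<open>The local index i_k of antenna k within the joint index i (N-bit representation
  of i is the concatenation of the Nb k-bit representations of i_0, ..., i_{Nt-1}).\<close>
definition sub_index :: "(nat \<Rightarrow> nat) \<Rightarrow> nat \<Rightarrow> nat \<Rightarrow> nat \<Rightarrow> nat" where
  "sub_index Nb Nt k i = (i div 2 ^ (Ntot Nb Nt - offs Nb k - Nb k)) mod 2 ^ (Nb k)"

definition dval :: "(nat \<Rightarrow> nat) \<Rightarrow> nat \<Rightarrow> (nat \<Rightarrow> nat \<Rightarrow> complex) \<Rightarrow>
    (nat \<Rightarrow> complex) \<Rightarrow> (nat \<Rightarrow> nat \<Rightarrow> complex) \<Rightarrow> nat \<Rightarrow> nat \<Rightarrow> real" where
  "dval Nb Nt a y H l i = (cmod (y l - (\<Sum>k<Nt. H l k * a k (sub_index Nb Nt k i)))) ^ 2"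

definition dbar :: "(nat \<Rightarrow> nat) \<Rightarrow> nat \<Rightarrow> nat \<Rightarrow> (nat \<Rightarrow> nat \<Rightarrow> complex) \<Rightarrow>
    (nat \<Rightarrow> complex) \<Rightarrow> (nat \<Rightarrow> nat \<Rightarrow> complex) \<Rightarrow> nat set \<Rightarrow> real" where
  "dbar Nb Nt Nr a y H S =
     (\<Sum>l<Nr. \<Sum>i\<in>{i. i < 2 ^ Ntot Nb Nt \<and>
                        (\<forall>n<Ntot Nb Nt. n \<notin> S \<longrightarrow> \<not> msb_bit (Ntot Nb Nt) i n)}.
        dval Nb Nt a y H l i *
        (\<Prod>n\<in>S. if msb_bit (Ntot Nb Nt) i n then 1 else -1))"

definition nzeros :: "nat \<Rightarrow> nat \<Rightarrow> nat" where
  "nzeros w t = card {j. j < w \<and> \<not> msb_bit w t j}"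

definition sel_points :: "(nat \<Rightarrow> nat) \<Rightarrow> nat set \<Rightarrow> nat \<Rightarrow> nat set" where
  "sel_points Nb S k = {t. t < 2 ^ Nb k \<and>
      (\<forall>j<Nb k. offs Nb k + j \<notin> S \<longrightarrow> \<not> msb_bit (Nb k) t j)}"

text \<open>p1 p2 p3 p4 (in cyclic order) are the four distinct vertices of a rectangle:
  a parallelogram (diagonals bisect each other) with diagonals of equal length.
  Diagonals are (p1,p3) and (p2,p4).\<close>
definition is_rectangle :: "complex \<Rightarrow> complex \<Rightarrow> complex \<Rightarrow> complex \<Rightarrow> bool" where
  "is_rectangle p1 p2 p3 p4 \<longleftrightarrow> distinct [p1, p2, p3, p4] \<and>
      p1 + p3 = p2 + p4 \<and> cmod (p1 - p3) = cmod (p2 - p4)"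

definition quad_set :: "nat \<times> nat \<times> nat \<times> nat \<Rightarrow> nat set" where
  "quad_set q = (case q of (t1, t2, t3, t4) \<Rightarrow> {t1, t2, t3, t4})"

definition rect_family :: "(nat \<Rightarrow> nat) \<Rightarrow> (nat \<Rightarrow> nat \<Rightarrow> complex) \<Rightarrow> nat set \<Rightarrow> nat \<Rightarrow>
    (nat \<times> nat \<times> nat \<times> nat) set \<Rightarrow> bool" where
  "rect_family Nb a S k Rs \<longleftrightarrow>
     (\<forall>(t1, t2, t3, t4) \<in> Rs.
        is_rectangle (a k t1) (a k t2) (a k t3) (a k t4) \<and>
        odd (nzeros (Nb k) t1) \<and> odd (nzeros (Nb k) t3) \<and>
        even (nzeros (Nb k) t2) \<and> even (nzeros (Nb k) t4)) \<and>
     (\<forall>q\<in>Rs. \<forall>q'\<in>Rs. q \<noteq> q' \<longrightarrow> quad_set q \<inter> quad_set q' = {}) \<and>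
     (\<Union>q\<in>Rs. quad_set q) = sel_points Nb S k"

end

theory Submission
  imports Defs
begin
unbundle bit_operations_syntax

lemma bit_lt_pow: "(t::nat) < 2^w \<Longrightarrow> bit t q \<Longrightarrow> q < w"
  by (metis bit_take_bit_iff take_bit_nat_eq_self_iff)

lemma lt_pow_bits: "(\<And>q. bit (x::nat) q \<Longrightarrow> q < N) \<Longrightarrow> x < 2^N"
  by (metis bit_eqI bit_take_bit_iff take_bit_nat_eq_self_iff)

lemma bit_E:
  fixes b t :: nat
  assumes "\<And>q. lo \<le> q \<Longrightarrow> q < lo + w \<Longrightarrow> \<not> bit b q" "t < 2^w"
  shows "bit (b + t * 2^lo) q \<longleftrightarrow> (if lo \<le> q \<and> q < lo + w then bit t (q - lo) else bit b q)"
proof -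
  have "b + t * 2^lo = b OR push_bit lo t"
    unfolding push_bit_eq_mult[symmetric]
    by (rule disjunctive_add) (use assms bit_lt_pow in \<open>fastforce simp: bit_push_bit_iff\<close>)
  then show ?thesis using assms(1) bit_lt_pow[OF assms(2), of "q - lo"]
    by (auto simp: bit_or_iff bit_push_bit_iff)
qed

lemma bit_sub: "bit ((x::nat) div 2^p mod 2^w) j \<longleftrightarrow> j < w \<and> bit x (p + j)"
  by (simp add: take_bit_eq_mod[symmetric] drop_bit_eq_div[symmetric] bit_take_bit_iff bit_drop_bit_eq)

definition base :: "nat \<Rightarrow> nat \<Rightarrow> nat \<Rightarrow> nat" where
  "base lo w i = i XOR push_bit lo (i div 2^lo mod 2^w)"

lemma bit_base: "bit (base lo w i) q \<longleftrightarrow> bit i q \<and> \<not> (lo \<le> q \<and> q < lo + w)"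
  unfolding base_def by (auto simp: bit_xor_iff bit_push_bit_iff bit_sub)

lemma paral: "cmod (x::complex) ^ 2 + cmod z ^ 2 = (cmod (x + z) ^ 2 + cmod (x - z) ^ 2) / 2"
  unfolding cmod_power2 by (simp add: algebra_simps power2_eq_square)

lemma rect_pair:
  fixes p1 p2 p3 p4 c h :: complex
  assumes "p1 + p3 = p2 + p4" "cmod (p1 - p3) = cmod (p2 - p4)"
  shows "cmod (c - h * p1) ^ 2 + cmod (c - h * p3) ^ 2 = cmod (c - h * p2) ^ 2 + cmod (c - h * p4) ^ 2"
proof -
  have e1: "(c - h * p1) + (c - h * p3) = 2 * c - h * (p1 + p3)" by (simp add: algebra_simps)
  have e2: "(c - h * p2) + (c - h * p4) = 2 * c - h * (p2 + p4)" by (simp add: algebra_simps)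
  have f1: "cmod ((c - h * p1) - (c - h * p3)) = cmod h * cmod (p1 - p3)"
    by (metis norm_minus_commute norm_mult right_diff_distrib diff_diff_eq2 add_diff_cancel_left' diff_add_cancel)
  have f2: "cmod ((c - h * p2) - (c - h * p4)) = cmod h * cmod (p2 - p4)"
    by (metis norm_minus_commute norm_mult right_diff_distrib diff_diff_eq2 add_diff_cancel_left' diff_add_cancel)
  have "cmod (c - h * p1) ^ 2 + cmod (c - h * p3) ^ 2 = (cmod (2 * c - h * (p1 + p3)) ^ 2 + (cmod h * cmod (p1 - p3)) ^ 2) / 2"
    by (simp only: paral e1 f1)
  moreover have "cmod (c - h * p2) ^ 2 + cmod (c - h * p4) ^ 2 = (cmod (2 * c - h * (p2 + p4)) ^ 2 + (cmod h * cmod (p2 - p4)) ^ 2) / 2"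
    by (simp only: paral e2 f2)
  ultimately show ?thesis using assms by simp
qed

lemma rect_sum_zero:
  assumes "rect_family Nb a S k Rs"
  shows "(\<Sum>t\<in>sel_points Nb S k. (-1) ^ nzeros (Nb k) t * cmod (c - h * a k t) ^ 2) = (0::real)"
proof -
  let ?F = "\<lambda>t. (-1) ^ nzeros (Nb k) t * cmod (c - h * a k t) ^ 2 :: real"
  have U: "sel_points Nb S k = \<Union> (quad_set ` Rs)"
    using assms unfolding rect_family_def by auto
  have "sum ?F (\<Union> (quad_set ` Rs)) = sum (sum ?F) (quad_set ` Rs)"
  proof -
    have "\<forall>A\<in>quad_set ` Rs. finite A" by (auto simp: quad_set_def split: prod.splits)
    moreover have "\<forall>A\<in>quad_set ` Rs. \<forall>B\<in>quad_set ` Rs. A \<noteq> B \<longrightarrow> A \<inter> B = {}"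
    proof (intro ballI impI)
      fix A B assume "A \<in> quad_set ` Rs" "B \<in> quad_set ` Rs" "A \<noteq> B"
      then obtain q q' where "q \<in> Rs" "q' \<in> Rs" "A = quad_set q" "B = quad_set q'" "q \<noteq> q'" by blast
      then show "A \<inter> B = {}" using assms unfolding rect_family_def by blast
    qed
    ultimately show ?thesis using sum.Union_disjoint[of "quad_set ` Rs" ?F] by simp
  qed
  also have "\<dots> = 0"
  proof (rule sum.neutral, rule ballI)
    fix A assume "A \<in> quad_set ` Rs"
    then obtain t1 t2 t3 t4 where q: "(t1, t2, t3, t4) \<in> Rs" and A: "A = {t1, t2, t3, t4}"
      by (auto simp: quad_set_def split: prod.splits)
    have R: "is_rectangle (a k t1) (a k t2) (a k t3) (a k t4)"
      "odd (nzeros (Nb k) t1)" "odd (nzeros (Nb k) t3)"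
      "even (nzeros (Nb k) t2)" "even (nzeros (Nb k) t4)"
      using assms q unfolding rect_family_def by fastforce+
    then have d: "distinct [t1, t2, t3, t4]" unfolding is_rectangle_def by auto
    have "sum ?F A = ?F t1 + ?F t2 + ?F t3 + ?F t4"
      using d by (simp add: A)
    also have "\<dots> = 0"
      using R rect_pair[of "a k t1" "a k t3" "a k t2" "a k t4" c h] unfolding is_rectangle_def
      by simp
    finally show "sum ?F A = 0" .
  qed
  finally show ?thesis using U by simp
qed

lemma offs_Suc: "offs Nb (Suc k) = offs Nb k + Nb k"
  by (simp add: offs_def)

lemma offs_mono: "k1 \<le> k2 \<Longrightarrow> offs Nb k1 \<le> offs Nb k2"
  unfolding offs_def by (rule sum_mono2) auto

lemma offs_blk_le: "k1 < k2 \<Longrightarrow> offs Nb k1 + Nb k1 \<le> offs Nb k2"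
  using offs_mono[of "Suc k1" k2 Nb] by (simp add: offs_Suc)

lemma Ntot_offs: "Ntot Nb Nt = offs Nb Nt"
  by (simp add: Ntot_def offs_def)

lemma prod_sign: "finite A \<Longrightarrow> (\<Prod>j\<in>A. if P j then 1 else -1 :: real) = (-1) ^ card {j\<in>A. \<not> P j}"
proof -
  assume fin: "finite A"
  have "(\<Prod>j\<in>A. if P j then 1 else -1 :: real) = (\<Prod>j\<in>{j\<in>A. \<not> P j}. -1)"
    using fin by (intro prod.mono_neutral_cong_right) auto
  then show ?thesis by simp
qed

lemma main_l:
  fixes a :: "nat \<Rightarrow> nat \<Rightarrow> complex"
  assumes kNt: "k < Nt" and RF: "rect_family Nb a S k Rs" and SN: "S \<subseteq> {..<Ntot Nb Nt}"
  shows "(\<Sum>i\<in>{i. i < 2 ^ Ntot Nb Nt \<and> (\<forall>n<Ntot Nb Nt. n \<notin> S \<longrightarrow> \<not> msb_bit (Ntot Nb Nt) i n)}.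
        dval Nb Nt a y H l i * (\<Prod>n\<in>S. if msb_bit (Ntot Nb Nt) i n then 1 else -1)) = 0"
proof -
  define N where "N = Ntot Nb Nt"
  define off where "off = offs Nb k"
  define w where "w = Nb k"
  define lo where "lo = N - off - w"
  have ow: "off + w \<le> N"
    using offs_mono[of "Suc k" Nt Nb] kNt unfolding N_def off_def w_def Ntot_offs offs_Suc by simp
  have N_eq: "N = lo + w + off" using ow unfolding lo_def by simp
  define I where "I = {i. i < 2 ^ N \<and> (\<forall>n<N. n \<notin> S \<longrightarrow> \<not> msb_bit N i n)}"
  define B where "B = {b. b < 2 ^ N \<and> (\<forall>n<N. n \<notin> S \<longrightarrow> \<not> msb_bit N b n) \<and> (\<forall>q. lo \<le> q \<and> q < lo + w \<longrightarrow> \<not> bit b q)}"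
  define sel where "sel = sel_points Nb S k"
  define E where "E = (\<lambda>(b::nat) (t::nat). b + t * 2 ^ lo)"
  define sub where "sub = (\<lambda>i::nat. i div 2 ^ lo mod 2 ^ w)"
  have sub_k: "sub_index Nb Nt k i = sub i" for i
    unfolding sub_index_def sub_def lo_def N_def off_def w_def ..
  have sel_iff: "t \<in> sel \<longleftrightarrow> t < 2 ^ w \<and> (\<forall>j<w. off + j \<notin> S \<longrightarrow> \<not> msb_bit w t j)" for t
    unfolding sel_def sel_points_def off_def w_def by simp
  have bitE: "bit (E b t) q \<longleftrightarrow> (if lo \<le> q \<and> q < lo + w then bit t (q - lo) else bit b q)"
    if "b \<in> B" "t < 2 ^ w" for b t q
    unfolding E_def by (rule bit_E) (use that in \<open>auto simp: B_def\<close>)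
  have msbE: "msb_bit N (E b t) n \<longleftrightarrow> (if off \<le> n \<and> n < off + w then msb_bit w t (n - off) else msb_bit N b n)"
    if "b \<in> B" "t < 2 ^ w" "n < N" for b t n
  proof -
    have "(lo \<le> N - 1 - n \<and> N - 1 - n < lo + w) \<longleftrightarrow> (off \<le> n \<and> n < off + w)"
      using N_eq that(3) by linarith
    moreover have "off \<le> n \<Longrightarrow> n < off + w \<Longrightarrow> N - 1 - n - lo = w - 1 - (n - off)"
      using N_eq that(3) by linarith
    ultimately show ?thesis
      unfolding msb_bit_def using bitE[OF that(1,2)] by auto
  qed
  have bitB_hi: "\<not> bit b q" if "b < 2 ^ N" "N \<le> q" for b q :: nat
    using bit_lt_pow[OF that(1)] that(2) by fastforce
  have E_lt: "E b t < 2 ^ N" if "b \<in> B" "t < 2 ^ w" for b t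
  proof (rule lt_pow_bits)
    fix q assume "bit (E b t) q"
    then show "q < N" using bitE[OF that, of q] bitB_hi[of b q] bit_lt_pow[OF that(2), of "q - lo"] that(1) N_eq
      by (auto simp: B_def split: if_splits)
  qed
  have subE: "sub (E b t) = t" if "b \<in> B" "t < 2 ^ w" for b t
  proof (rule bit_eqI)
    fix j
    show "bit (sub (E b t)) j \<longleftrightarrow> bit t j"
      unfolding sub_def bit_sub using bitE[OF that, of "lo + j"] bit_lt_pow[OF that(2), of j] by auto
  qed
  have baseE: "base lo w (E b t) = b" if "b \<in> B" "t < 2 ^ w" for b t
  proof (rule bit_eqI)
    fix q
    show "bit (base lo w (E b t)) q \<longleftrightarrow> bit b q"
      unfolding bit_base using bitE[OF that, of q] that(1) by (auto simp: B_def)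
  qed
  have subE_other: "sub_index Nb Nt k' (E b t) = sub_index Nb Nt k' b"
    if "b \<in> B" "t < 2 ^ w" "k' < Nt" "k' \<noteq> k" for b t k'
  proof -
    have ow': "offs Nb k' + Nb k' \<le> N"
      using offs_mono[of "Suc k'" Nt Nb] that(3) unfolding N_def Ntot_offs offs_Suc by simp
    define p where "p = N - offs Nb k' - Nb k'"
    have disj: "\<not> (lo \<le> p + j \<and> p + j < lo + w)" if "j < Nb k'" for j
    proof (cases "k' < k")
      case True
      then have "offs Nb k' + Nb k' \<le> off" unfolding off_def by (rule offs_blk_le)
      then show ?thesis unfolding p_def using N_eq ow' by linarith
    next
      case False
      then have "k < k'" using \<open>k' \<noteq> k\<close> by simp
      then have "off + w \<le> offs Nb k'" unfolding off_def w_def by (rule offs_blk_le)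
      then show ?thesis unfolding p_def using N_eq ow' that by linarith
    qed
    show ?thesis
    proof (rule bit_eqI)
      fix j
      show "bit (sub_index Nb Nt k' (E b t)) j \<longleftrightarrow> bit (sub_index Nb Nt k' b) j"
        unfolding sub_index_def N_def[symmetric] p_def[symmetric] bit_sub
        using bitE[OF that(1,2), of "p + j"] disj[of j] by auto
    qed
  qed
  have sum_eq: "(\<Sum>i\<in>I. G i) = (\<Sum>(b, t)\<in>B \<times> sel. G (E b t))" for G :: "nat \<Rightarrow> real"
  proof (rule sum.reindex_bij_witness[where j = "\<lambda>i. (base lo w i, sub i)" and i = "\<lambda>(b, t). E b t"])
    fix i assume iI: "i \<in> I"
    have sub_lt: "sub i < 2 ^ w" unfolding sub_def by simp
    have bB: "base lo w i \<in> B"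
    proof -
      have "base lo w i < 2 ^ N"
        by (rule lt_pow_bits) (use iI bit_lt_pow in \<open>auto simp: I_def bit_base\<close>)
      moreover have "\<forall>n<N. n \<notin> S \<longrightarrow> \<not> msb_bit N (base lo w i) n"
        using iI by (auto simp: I_def msb_bit_def bit_base)
      ultimately show ?thesis by (auto simp: B_def bit_base)
    qed
    have "sub i \<in> sel"
    proof -
      have "\<not> msb_bit w (sub i) j" if "j < w" "off + j \<notin> S" for j
      proof -
        have "msb_bit w (sub i) j = bit i (lo + (w - 1 - j))"
          unfolding msb_bit_def sub_def bit_sub using that(1) by simp
        also have "lo + (w - 1 - j) = N - 1 - (off + j)" using N_eq that(1) by linarith
        finally have eq: "msb_bit w (sub i) j = bit i (N - 1 - (off + j))" .
        have "off + j < N" using N_eq that by linarith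
        then have "\<not> msb_bit N i (off + j)" using iI that(2) by (auto simp: I_def)
        then show ?thesis using eq by (simp add: msb_bit_def)
      qed
      then show ?thesis using sub_lt sel_iff by blast
    qed
    then show "(base lo w i, sub i) \<in> B \<times> sel" using bB by simp
    show "(case (base lo w i, sub i) of (b, t) \<Rightarrow> E b t) = i"
    proof (simp, rule bit_eqI)
      fix q
      show "bit (E (base lo w i) (sub i)) q \<longleftrightarrow> bit i q"
        using bitE[OF bB sub_lt, of q] by (auto simp: bit_base sub_def bit_sub)
    qed
    then show "(case (base lo w i, sub i) of (b, t) \<Rightarrow> G (E b t)) = G i" by simp
  next
    fix x assume "x \<in> B \<times> sel"
    then obtain b t where x: "x = (b, t)" "b \<in> B" "t \<in> sel" by blast
    then have tw: "t < 2 ^ w" using sel_iff by blast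
    show "(base lo w (case x of (b, t) \<Rightarrow> E b t), sub (case x of (b, t) \<Rightarrow> E b t)) = x"
      using x baseE subE tw by simp
    have "E b t \<in> I"
    proof -
      have "\<not> msb_bit N (E b t) n" if "n < N" "n \<notin> S" for n
      proof (cases "off \<le> n \<and> n < off + w")
        case True
        then have "off + (n - off) \<notin> S" "n - off < w" using that by auto
        then show ?thesis using msbE[OF x(2) tw that(1)] True x(3) sel_iff by auto
      next
        case False
        then show ?thesis using msbE[OF x(2) tw that(1)] x(2) that by (auto simp: B_def)
      qed
      then show ?thesis using E_lt[OF x(2) tw] by (auto simp: I_def)
    qed
    then show "(case x of (b, t) \<Rightarrow> E b t) \<in> I" using x by simp
  qed
  have jN: "\<And>j. j < w \<Longrightarrow> off + j < N" using N_eq by linarith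
  have finS: "finite S" using SN finite_subset by blast
  have SN': "n \<in> S \<Longrightarrow> n < N" for n using SN unfolding N_def by blast
  have inner: "(\<Sum>t\<in>sel. dval Nb Nt a y H l (E b t) * (\<Prod>n\<in>S. if msb_bit N (E b t) n then 1 else -1)) = 0"
    if bB: "b \<in> B" for b
  proof -
    define c where "c = y l - (\<Sum>k'\<in>{..<Nt} - {k}. H l k' * a k' (sub_index Nb Nt k' b))"
    define Sk where "Sk = {j. j < w \<and> off + j \<in> S}"
    define eps where "eps = (-1::real) ^ card ({..<w} - Sk)"
    define P where "P = (\<Prod>n\<in>S - {off..<off+w}. if msb_bit N b n then 1 else -1 :: real)"
    have dv: "dval Nb Nt a y H l (E b t) = cmod (c - H l k * a k t) ^ 2" if "t \<in> sel" for t
    proof -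
      have tw: "t < 2 ^ w" using that sel_iff by blast
      have "(\<Sum>k'<Nt. H l k' * a k' (sub_index Nb Nt k' (E b t))) =
          H l k * a k (sub_index Nb Nt k (E b t)) + (\<Sum>k'\<in>{..<Nt} - {k}. H l k' * a k' (sub_index Nb Nt k' (E b t)))"
        by (rule sum.remove) (use kNt in auto)
      also have "\<dots> = H l k * a k t + (\<Sum>k'\<in>{..<Nt} - {k}. H l k' * a k' (sub_index Nb Nt k' b))"
        using subE_other[OF bB tw] by (auto simp: sub_k subE[OF bB tw] intro!: sum.cong)
      finally have "y l - (\<Sum>k'<Nt. H l k' * a k' (sub_index Nb Nt k' (E b t))) = c - H l k * a k t"
        unfolding c_def by simp
      then show ?thesis unfolding dval_def by simp
    qed
    have eps2: "eps * eps = 1"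
      unfolding eps_def by (cases "even (card ({..<w} - Sk))") auto
    have sg: "(\<Prod>n\<in>S. if msb_bit N (E b t) n then 1 else -1) = P * (eps * (-1) ^ nzeros w t)"
      if "t \<in> sel" for t
    proof -
      have tw: "t < 2 ^ w" using that sel_iff by blast
      have "(\<Prod>n\<in>S. if msb_bit N (E b t) n then 1 else -1 :: real) =
          (\<Prod>n\<in>S \<inter> {off..<off+w}. if msb_bit N (E b t) n then 1 else -1) *
          (\<Prod>n\<in>S - {off..<off+w}. if msb_bit N (E b t) n then 1 else -1)"
        by (rule prod.Int_Diff[OF finS])
      moreover have "(\<Prod>n\<in>S - {off..<off+w}. if msb_bit N (E b t) n then 1 else -1 :: real) = P"
        unfolding P_def by (rule prod.cong) (use msbE[OF bB tw] SN' in auto)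
      moreover have S_img: "S \<inter> {off..<off+w} = (\<lambda>j. off + j) ` Sk"
      proof (rule set_eqI, rule iffI)
        fix n assume "n \<in> S \<inter> {off..<off+w}"
        then have "n = off + (n - off)" "n - off \<in> Sk" unfolding Sk_def by auto
        then show "n \<in> (\<lambda>j. off + j) ` Sk" by blast
      qed (auto simp: Sk_def)
      moreover have "(\<Prod>n\<in>(\<lambda>j. off + j) ` Sk. if msb_bit N (E b t) n then 1 else -1 :: real) =
          (\<Prod>j\<in>Sk. if msb_bit w t j then 1 else -1)"
        by (subst prod.reindex) (auto simp: inj_on_def Sk_def msbE[OF bB tw] jN intro!: prod.cong)
      moreover have "(\<Prod>j<w. if msb_bit w t j then 1 else -1 :: real) = (-1) ^ nzeros w t"
        unfolding nzeros_def by (subst prod_sign) simp_all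
      moreover have "(\<Prod>j<w. if msb_bit w t j then 1 else -1 :: real) =
          (\<Prod>j\<in>Sk. if msb_bit w t j then 1 else -1) * (\<Prod>j\<in>{..<w} - Sk. if msb_bit w t j then 1 else -1)"
      proof -
        have "{..<w} \<inter> Sk = Sk" unfolding Sk_def by auto
        then show ?thesis using prod.Int_Diff[of "{..<w}" _ Sk] by simp
      qed
      moreover have "(\<Prod>j\<in>{..<w} - Sk. if msb_bit w t j then 1 else -1 :: real) = eps"
      proof -
        have "(\<Prod>j\<in>{..<w} - Sk. if msb_bit w t j then 1 else -1 :: real) = (\<Prod>j\<in>{..<w} - Sk. -1)"
          by (rule prod.cong) (use that sel_iff in \<open>auto simp: Sk_def\<close>)
        then show ?thesis unfolding eps_def by simp
      qed
      ultimately have "(\<Prod>n\<in>S. if msb_bit N (E b t) n then 1 else -1 :: real) * eps = P * (-1) ^ nzeros w t"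
        by (simp add: mult_ac)
      then have "(\<Prod>n\<in>S. if msb_bit N (E b t) n then 1 else -1 :: real) * (eps * eps) = P * (-1) ^ nzeros w t * eps"
        by (metis mult.assoc)
      then show ?thesis using eps2 by (simp add: mult_ac)
    qed
    have "(\<Sum>t\<in>sel. dval Nb Nt a y H l (E b t) * (\<Prod>n\<in>S. if msb_bit N (E b t) n then 1 else -1)) =
        (\<Sum>t\<in>sel. (P * eps) * ((-1) ^ nzeros w t * cmod (c - H l k * a k t) ^ 2))"
      by (rule sum.cong) (simp_all add: dv sg mult_ac)
    also have "\<dots> = (P * eps) * (\<Sum>t\<in>sel. (-1) ^ nzeros w t * cmod (c - H l k * a k t) ^ 2)"
      by (simp add: sum_distrib_left)
    also have "\<dots> = 0"
      using rect_sum_zero[OF RF, of c "H l k"] by (simp add: sel_def w_def)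
    finally show ?thesis .
  qed
  have "(\<Sum>i\<in>I. dval Nb Nt a y H l i * (\<Prod>n\<in>S. if msb_bit N i n then 1 else -1)) = 0"
    unfolding sum_eq sum.cartesian_product[symmetric] using inner by simp
  then show ?thesis unfolding I_def N_def .
qed

theorem proposition3:
  fixes Nt Nr :: nat and Nb :: "nat \<Rightarrow> nat"
    and a :: "nat \<Rightarrow> nat \<Rightarrow> complex"
    and y :: "nat \<Rightarrow> complex" and H :: "nat \<Rightarrow> nat \<Rightarrow> complex"
    and S :: "nat set"
  assumes "S \<subseteq> {..<Ntot Nb Nt}"
    and "\<exists>k<Nt. \<exists>Rs. rect_family Nb a S k Rs"
  shows "dbar Nb Nt Nr a y H S = 0"
proof -
  obtain k Rs where "k < Nt" "rect_family Nb a S k Rs" using assms(2) by blast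
  then show ?thesis unfolding dbar_def using main_l[OF _ _ assms(1)] by simp
qed

end
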